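(* Let $l:\mathbb{R}\times\mathbb{R}\to\mathbb{R}$ be doubly convex (jointly convex), i.e. $l(\mu u_1+(1-\mu)u_2,\mu v_1+(1-\mu)v_2)\le\mu\,l(u_1,v_1)+(1-\mu)\,l(u_2,v_2)$ for all $u_i,v_i$ and $\mu\in[0,1]$, and let $f:\mathbb{X}\to\mathbb{R}$ be such that all expected $k$-risks below are finite. Then for all integers $1\le k\le k'$, $$r_k(f,\mathcal{D})\ge r_{k'}(f,\mathcal{D}).$$
   Context: Let $\mathcal{D}$ be a probability distribution on $\mathbb{Z}=\mathbb{X}\times\mathbb{Y}$, $\mathbb{Y}\subset\mathbb{R}$. For a finite family $S$ and function $g$, $\hat{E}_S[g(z)]=\frac{1}{|S|}\sum_{z\in S}g(z)$. The expected $k$-risk is $r_k(f,\mathcal{D})=\mathbb{E}_{S\sim\mathcal{D}^k}\big[l(\hat{E}_S[f(x)],\hat{E}_S[y])\big]$ where $S=(z_1,\dots,z_k)$ consists of $k$ i.i.d. draws from $\mathcal{D}$. *)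

theory Defs
  imports "HOL-Probability.Probability"
begin

definition emp_mean :: "nat \<Rightarrow> (nat \<Rightarrow> 'a) \<Rightarrow> ('a \<Rightarrow> real) \<Rightarrow> real" where
  "emp_mean k S g = (\<Sum>i<k. g (S i)) / real k"

definition doubly_convex :: "(real \<Rightarrow> real \<Rightarrow> real) \<Rightarrow> bool" where
  "doubly_convex l \<longleftrightarrow> (\<forall>u1 u2 v1 v2 \<mu>. 0 \<le> \<mu> \<and> \<mu> \<le> 1 \<longrightarrow>
     l (\<mu> * u1 + (1 - \<mu>) * u2) (\<mu> * v1 + (1 - \<mu>) * v2) \<le> \<mu> * l u1 v1 + (1 - \<mu>) * l u2 v2)"

definition k_loss :: "(real \<Rightarrow> real \<Rightarrow> real) \<Rightarrow> ('x \<Rightarrow> real) \<Rightarrow> nat \<Rightarrow> (nat \<Rightarrow> 'x \<times> real) \<Rightarrow> real" where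
  "k_loss l f k S = l (emp_mean k S (\<lambda>z. f (fst z))) (emp_mean k S snd)"

definition k_risk :: "(real \<Rightarrow> real \<Rightarrow> real) \<Rightarrow> ('x \<Rightarrow> real) \<Rightarrow> ('x \<times> real) measure \<Rightarrow> nat \<Rightarrow> real" where
  "k_risk l f D k = (\<integral>S. k_loss l f k S \<partial>(PiM {..<k} (\<lambda>_. D)))"

end

theory Submission
  imports Defs
begin

lemma modinj: assumes "(a::nat) < n" "b < n" "(a + i) mod n = (b + i) mod n" shows "a = b"
proof -
  have n: "n > 0" using assms by auto
  define c where "c = i mod n"
  have c: "c < n" using n by (simp add: c_def)
  have e: "(a + c) mod n = (b + c) mod n" using assms(3) by (simp add: c_def mod_add_right_eq)
  have m: "(x + c) mod n = (if x + c < n then x + c else x + c - n)" if "x < n" for x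
    using that c by (simp add: mod_if le_mod_geq)
  show ?thesis using e m[OF assms(1)] m[OF assms(2)] assms(1,2) by (auto split: if_splits)
qed

lemma rot_sum:
  fixes h :: "nat \<Rightarrow> real"
  assumes "0 < n"
  shows "(\<Sum>j<n. h ((j + i) mod n)) = (\<Sum>m<n. h m)"
proof -
  have inj: "inj_on (\<lambda>j. (j + i) mod n) {..<n}"
  proof (rule inj_onI)
    fix a b assume "a \<in> {..<n}" "b \<in> {..<n}" "(a + i) mod n = (b + i) mod n"
    then show "a = b"
      using modinj by auto
  qed
  have "(\<lambda>j. (j + i) mod n) ` {..<n} = {..<n}"
    using inj assms by (intro card_subset_eq) (auto simp: card_image)
  then have "bij_betw (\<lambda>j. (j + i) mod n) {..<n} {..<n}"
    using inj by (simp add: bij_betw_def)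
  then show ?thesis by (rule sum.reindex_bij_betw)
qed

definition win :: "nat \<Rightarrow> nat \<Rightarrow> nat \<Rightarrow> (nat \<Rightarrow> 'a) \<Rightarrow> (nat \<Rightarrow> 'a)" where
  "win k k' j S = (\<lambda>n\<in>{..<k}. S ((j + n) mod k'))"

lemma emp_mean_win:
  assumes "1 \<le> k" "k \<le> k'"
  shows "emp_mean k' S g = (\<Sum>j<k'. emp_mean k (win k k' j S) g) / real k'"
proof -
  have "(\<Sum>j<k'. emp_mean k (win k k' j S) g) = (\<Sum>j<k'. \<Sum>i<k. g (S ((j + i) mod k'))) / real k"
    by (simp add: emp_mean_def win_def sum_divide_distrib)
  also have "(\<Sum>j<k'. \<Sum>i<k. g (S ((j + i) mod k'))) = (\<Sum>i<k. \<Sum>j<k'. g (S ((j + i) mod k')))"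
    by (rule sum.swap)
  also have "\<dots> = (\<Sum>i<k. \<Sum>m<k'. g (S m))"
    using assms by (intro sum.cong refl rot_sum[where h="\<lambda>m. g (S m)"]) auto
  finally show ?thesis using assms by (simp add: emp_mean_def)
qed

lemma convex_l:
  assumes "doubly_convex l"
  shows "convex_on UNIV (\<lambda>p::real\<times>real. l (fst p) (snd p))"
proof (rule convex_onI[OF _ convex_UNIV])
  fix t :: real and x y :: "real \<times> real" assume t: "0 < t" "t < 1"
  have "l ((1 - t) * fst x + (1 - (1 - t)) * fst y) ((1 - t) * snd x + (1 - (1 - t)) * snd y) \<le> (1 - t) * l (fst x) (snd x) + (1 - (1 - t)) * l (fst y) (snd y)"
    using assms[unfolded doubly_convex_def, rule_format, of "1 - t" "fst x" "fst y" "snd x" "snd y"] t by simp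
  then show "l (fst ((1 - t) *\<^sub>R x + t *\<^sub>R y)) (snd ((1 - t) *\<^sub>R x + t *\<^sub>R y)) \<le> (1 - t) * l (fst x) (snd x) + t * l (fst y) (snd y)"
    by simp
qed

lemma pointwise:
  assumes "doubly_convex l" "1 \<le> k" "k \<le> k'"
  shows "k_loss l f k' S \<le> (\<Sum>j<k'. k_loss l f k (win k k' j S)) / real k'"
proof -
  define y where "y j = (emp_mean k (win k k' j S) (\<lambda>z. f (fst z)), emp_mean k (win k k' j S) snd)" for j
  have k'0: "k' > 0" using assms by auto
  have conv: "(\<lambda>p::real\<times>real. l (fst p) (snd p)) (\<Sum>j<k'. (1 / real k') *\<^sub>R y j) \<le> (\<Sum>j<k'. (1 / real k') * (\<lambda>p. l (fst p) (snd p)) (y j))"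
    by (rule convex_on_sum[OF _ _ convex_l[OF assms(1)]]) (use k'0 in auto)
  have h1: "fst (\<Sum>j<k'. (1 / real k') *\<^sub>R y j) = emp_mean k' S (\<lambda>z. f (fst z))"
    by (simp only: emp_mean_win[OF assms(2,3)]) (simp add: fst_sum y_def sum_divide_distrib)
  have h2: "snd (\<Sum>j<k'. (1 / real k') *\<^sub>R y j) = emp_mean k' S snd"
    by (simp only: emp_mean_win[OF assms(2,3)]) (simp add: snd_sum y_def sum_divide_distrib)
  have e1: "k_loss l f k' S = (\<lambda>p::real\<times>real. l (fst p) (snd p)) (\<Sum>j<k'. (1 / real k') *\<^sub>R y j)"
    by (simp only: k_loss_def h1 h2)
  have e2: "(\<Sum>j<k'. (1 / real k') * (\<lambda>p. l (fst p) (snd p)) (y j)) = (\<Sum>j<k'. k_loss l f k (win k k' j S)) / real k'"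
    by (simp add: y_def k_loss_def sum_divide_distrib)
  show ?thesis using conv unfolding e1 e2 .
qed

theorem mainTheorem5:
  fixes l :: "real \<Rightarrow> real \<Rightarrow> real"
    and f :: "'x \<Rightarrow> real"
    and D :: "('x \<times> real) measure"
    and k k' :: nat
  assumes "prob_space D"
    and "doubly_convex l"
    and "1 \<le> k" and "k \<le> k'"
    and "integrable (PiM {..<k} (\<lambda>_. D)) (k_loss l f k)"
    and "integrable (PiM {..<k'} (\<lambda>_. D)) (k_loss l f k')"
  shows "k_risk l f D k \<ge> k_risk l f D k'"
proof -
  let ?K = "PiM {..<k} (\<lambda>_. D)" and ?K' = "PiM {..<k'} (\<lambda>_. D)"
  have k'0: "k' > 0" using assms by auto
  have meas: "win k k' j \<in> measurable ?K' ?K" if "j < k'" for j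
    unfolding win_def
    by (intro measurable_restrict measurable_component_singleton) (use k'0 in auto)
  have distr: "distr ?K' ?K (win k k' j) = ?K" if "j < k'" for j
  proof -
    have "inj_on (\<lambda>n. (j + n) mod k') {..<k}"
    proof (rule inj_onI)
      fix a b assume "a \<in> {..<k}" "b \<in> {..<k}" "(j + a) mod k' = (j + b) mod k'"
      then show "a = b" using assms(4) modinj[of a k' b j]
        by (simp add: add.commute)
    qed
    moreover have "(\<lambda>n. (j + n) mod k') \<in> {..<k} \<rightarrow> {..<k'}" using k'0 by auto
    ultimately show ?thesis
      unfolding win_def using distr_PiM_reindex[of "{..<k'}" "\<lambda>_. D" "\<lambda>n. (j + n) mod k'" "{..<k}"] assms(1)
      by (simp add: win_def)
  qed
  have bm: "k_loss l f k \<in> borel_measurable ?K"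
    using assms(5) by auto
  have int_j: "integrable ?K' (\<lambda>S. k_loss l f k (win k k' j S))" if "j < k'" for j
    using integrable_distr_eq[OF meas[OF that] bm] distr[OF that] assms(5) by simp
  have int_eq: "(\<integral>S. k_loss l f k (win k k' j S) \<partial>?K') = k_risk l f D k" if "j < k'" for j
    using integral_distr[OF meas[OF that] bm] distr[OF that] by (simp add: k_risk_def)
  have "k_risk l f D k' \<le> (\<integral>S. (\<Sum>j<k'. k_loss l f k (win k k' j S)) / real k' \<partial>?K')"
    unfolding k_risk_def
    by (rule integral_mono[OF assms(6)]) (use int_j pointwise[OF assms(2,3,4)] in \<open>auto intro!: integrable_divide integrable_sum\<close>)
  also have "\<dots> = (\<Sum>j<k'. \<integral>S. k_loss l f k (win k k' j S) \<partial>?K') / real k'"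
    using int_j by (simp add: integral_sum)
  also have "\<dots> = k_risk l f D k"
    using int_eq k'0 by simp
  finally show ?thesis .
qed

end
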